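(* Let $0<k_1<k_2$, $d>0$, and assume $2d\sqrt{k_2^2-k_1^2}\neq n\pi$ for every positive integer $n$. Consider the equation $W(\xi,\delta)=0$ for $\xi\in\mathbb{R}$ and $\delta\ge0$ (where $\delta=0$ means $\delta=0^+$). Its solutions are finitely many points $\{\pm\xi_n:\ n=1,\dots,N\}$, all occurring with $\delta=0^+$, each a simple zero of $\xi\mapsto W(\xi,0^+)$, and satisfying $k_1<|\xi_n|<k_2$; there are no other solutions. Moreover $N\ge1$, i.e. there is at least one nontrivial solution of $W(\xi,0^+)=0$.
   Context: Let $q(x)=(k_2^2-k_1^2)\chi_{[-d,d]}(x)$. The square root $\sqrt{z}$ is the principal branch on $\mathbb{C}\setminus(-\infty,0]$, positive on $(0,\infty)$. For $\xi\in\mathbb{R}$, $\delta>0$, let $u_\pm(\xi,\delta;\cdot)$ be the solutions of $u''+(k_1^2+q(x)-\xi^2+i\delta)u=0$ (with $u,u'$ continuous) determined by $u_\pm(\xi,\delta;x)=e^{\pm ix\sqrt{k_1^2-\xi^2+i\delta}}$ for $\pm x>d$; $u_\pm(\xi,0^+;\cdot)$ denotes the limit as $\delta\to0^+$ (so $\sqrt{k_1^2-\xi^2}$ is replaced by $i\sqrt{\xi^2-k_1^2}$ when $|\xi|>k_1$). The Wronskian is $W(\xi,\delta)=u_-\partial_xu_+-u_+\partial_xu_-$ (independent of $x$), and $W(\xi,0^+)=\lim_{\delta\to0^+}W(\xi,\delta)$. *)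

theory Defs
  imports "HOL-Analysis.Analysis"
begin

definition qpot :: "real \<Rightarrow> real \<Rightarrow> real \<Rightarrow> real \<Rightarrow> real" where
  "qpot k1 k2 d x = (k2\<^sup>2 - k1\<^sup>2) * indicator {-d..d} x"

definition is_sol :: "real \<Rightarrow> real \<Rightarrow> real \<Rightarrow> real \<Rightarrow> real \<Rightarrow> (real \<Rightarrow> complex) \<Rightarrow> bool" where
  "is_sol k1 k2 d xi delta u \<longleftrightarrow>
     (\<exists>u'. (\<forall>x. (u has_vector_derivative u' x) (at x)) \<and> continuous_on UNIV u' \<and>
        (\<forall>x. x \<noteq> d \<and> x \<noteq> -d \<longrightarrow>
           (u' has_vector_derivative
              (- (complex_of_real (k1\<^sup>2 + qpot k1 k2 d x - xi\<^sup>2) + \<i> * complex_of_real delta) * u x)) (at x)))"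

definition kz :: "real \<Rightarrow> real \<Rightarrow> real \<Rightarrow> complex" where
  "kz k1 xi delta = csqrt (complex_of_real (k1\<^sup>2 - xi\<^sup>2) + \<i> * complex_of_real delta)"

definition u_plus :: "real \<Rightarrow> real \<Rightarrow> real \<Rightarrow> real \<Rightarrow> real \<Rightarrow> real \<Rightarrow> complex" where
  "u_plus k1 k2 d xi delta = (THE u. is_sol k1 k2 d xi delta u \<and>
      (\<forall>x. x > d \<longrightarrow> u x = exp (\<i> * complex_of_real x * kz k1 xi delta)))"

definition u_minus :: "real \<Rightarrow> real \<Rightarrow> real \<Rightarrow> real \<Rightarrow> real \<Rightarrow> real \<Rightarrow> complex" where
  "u_minus k1 k2 d xi delta = (THE u. is_sol k1 k2 d xi delta u \<and>
      (\<forall>x. x < -d \<longrightarrow> u x = exp (- \<i> * complex_of_real x * kz k1 xi delta)))"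

text \<open>Wronskian W = u_- u_+' - u_+ u_-' (independent of x; evaluated at x = 0).\<close>
definition Wr :: "real \<Rightarrow> real \<Rightarrow> real \<Rightarrow> real \<Rightarrow> real \<Rightarrow> complex" where
  "Wr k1 k2 d xi delta =
     u_minus k1 k2 d xi delta 0 * vector_derivative (u_plus k1 k2 d xi delta) (at 0)
   - u_plus k1 k2 d xi delta 0 * vector_derivative (u_minus k1 k2 d xi delta) (at 0)"

definition W0 :: "real \<Rightarrow> real \<Rightarrow> real \<Rightarrow> real \<Rightarrow> complex" where
  "W0 k1 k2 d xi = Lim (at_right 0) (\<lambda>delta. Wr k1 k2 d xi delta)"

end

theory Submission
  imports Defs
begin


lemma has_derivative_Un_within:
  assumes "(f has_derivative f') (at x within s)" "(f has_derivative f') (at x within t)"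
  shows "(f has_derivative f') (at x within (s \<union> t))"
  using assms unfolding has_derivative_at_within by (auto simp: Lim_within_Un)

lemma glue_deriv:
  fixes f g :: "real \<Rightarrow> complex"
  assumes "(f has_vector_derivative D) (at c)" "(g has_vector_derivative D) (at c)" "f c = g c"
  shows "((\<lambda>y. if y \<le> c then f y else g y) has_vector_derivative D) (at c)"
proof -
  let ?p = "(\<lambda>y. if y \<le> c then f y else g y)"
  have 1: "(?p has_vector_derivative D) (at c within {..c})"
    by (rule has_vector_derivative_transform[of c "{..c}" _ f])
       (auto intro: has_vector_derivative_at_within[OF assms(1)])
  have 2: "(?p has_vector_derivative D) (at c within {c..})"
    by (rule has_vector_derivative_transform[of c "{c..}" _ g])
       (use assms in \<open>auto intro: has_vector_derivative_at_within\<close>)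
  have "(?p has_vector_derivative D) (at c within ({..c} \<union> {c..}))"
    using 1 2 unfolding has_vector_derivative_def by (rule has_derivative_Un_within)
  moreover have "{..c} \<union> {c..} = (UNIV::real set)" by auto
  ultimately show ?thesis by simp
qed

lemma glue_cont:
  fixes f g :: "real \<Rightarrow> complex"
  assumes "isCont f c" "isCont g c" "f c = g c"
  shows "isCont (\<lambda>y. if y \<le> c then f y else g y) c"
proof -
  let ?p = "(\<lambda>y. if y \<le> c then f y else g y)"
  have l: "(?p \<longlongrightarrow> ?p c) (at_left c)"
  proof (rule Lim_transform_eventually)
    show "(f \<longlongrightarrow> ?p c) (at_left c)" using assms(1) 
      by (simp add: isCont_def filterlim_at_split)
    show "\<forall>\<^sub>F x in at_left c. f x = ?p x" 
      by (rule eventually_mono[OF eventually_at_left_real[where a=c and b="c - 1"]]) auto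
  qed
  have r: "(?p \<longlongrightarrow> ?p c) (at_right c)"
  proof (rule Lim_transform_eventually)
    show "(g \<longlongrightarrow> ?p c) (at_right c)" using assms(2,3) 
      by (simp add: isCont_def filterlim_at_split)
    show "\<forall>\<^sub>F x in at_right c. g x = ?p x" 
      by (rule eventually_mono[OF eventually_at_right_less]) auto
  qed
  show ?thesis unfolding isCont_def using l r by (rule filterlim_split_at)
qed

definition gsol :: "complex \<Rightarrow> real \<Rightarrow> complex \<Rightarrow> complex \<Rightarrow> real \<Rightarrow> complex" where
  "gsol m a \<alpha> \<beta> x = \<alpha> * cos (m * of_real (x - a)) + \<beta> * sin (m * of_real (x - a)) / m"
definition gsol' :: "complex \<Rightarrow> real \<Rightarrow> complex \<Rightarrow> complex \<Rightarrow> real \<Rightarrow> complex" where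
  "gsol' m a \<alpha> \<beta> x = - \<alpha> * m * sin (m * of_real (x - a)) + \<beta> * cos (m * of_real (x - a))"

lemma gsol_at [simp]: "gsol m a \<alpha> \<beta> a = \<alpha>" "gsol' m a \<alpha> \<beta> a = \<beta>"
  by (simp_all add: gsol_def gsol'_def)

lemma gsol_deriv:
  assumes "m \<noteq> 0"
  shows "(gsol m a \<alpha> \<beta> has_vector_derivative gsol' m a \<alpha> \<beta> x) (at x within S)"
proof -
  have "((\<lambda>z. \<alpha> * cos (m * (z - of_real a)) + \<beta> * sin (m * (z - of_real a)) / m) has_field_derivative
        gsol' m a \<alpha> \<beta> x) (at (of_real x))"
    using assms by (auto intro!: derivative_eq_intros simp: gsol'_def field_simps)
  moreover have "gsol m a \<alpha> \<beta> = (\<lambda>x. \<alpha> * cos (m * (of_real x - of_real a)) + \<beta> * sin (m * (of_real x - of_real a)) / m)"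
    by (simp add: fun_eq_iff gsol_def)
  ultimately show ?thesis using has_vector_derivative_real_field[of _ _ x S] by simp
qed

lemma gsol'_deriv:
  shows "(gsol' m a \<alpha> \<beta> has_vector_derivative (- (m\<^sup>2) * gsol m a \<alpha> \<beta> x)) (at x within S)"
proof (cases "m = 0")
  case True
  then have "gsol' m a \<alpha> \<beta> = (\<lambda>x. \<beta>)" by (simp add: fun_eq_iff gsol'_def)
  then show ?thesis using True by simp
next
  case False
  have "((\<lambda>z. - \<alpha> * m * sin (m * (z - of_real a)) + \<beta> * cos (m * (z - of_real a))) has_field_derivative
        (- (m\<^sup>2) * gsol m a \<alpha> \<beta> x)) (at (of_real x))"
    using False by (auto intro!: derivative_eq_intros simp: gsol_def field_simps power2_eq_square)
  moreover have "gsol' m a \<alpha> \<beta> = (\<lambda>x. - \<alpha> * m * sin (m * (of_real x - of_real a)) + \<beta> * cos (m * (of_real x - of_real a)))"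
    by (simp add: fun_eq_iff gsol'_def)
  ultimately show ?thesis using has_vector_derivative_real_field[of _ _ x S] by simp
qed



lemma piece_deriv_left:
  fixes f g :: "real \<Rightarrow> complex"
  assumes "y < c" "(f has_vector_derivative D) (at y)"
  shows "((\<lambda>y. if y \<le> c then f y else g y) has_vector_derivative D) (at y)"
  by (rule has_vector_derivative_transform_within_open[OF assms(2), of "{..<c}"]) (use assms in auto)

lemma piece_deriv_right:
  fixes f g :: "real \<Rightarrow> complex"
  assumes "y > c" "(g has_vector_derivative D) (at y)"
  shows "((\<lambda>y. if y \<le> c then f y else g y) has_vector_derivative D) (at y)"
  by (rule has_vector_derivative_transform_within_open[OF assms(2), of "{c<..}"]) (use assms in auto)

lemma piece_cont_left:
  fixes f g :: "real \<Rightarrow> complex"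
  assumes "y < c" "isCont f y"
  shows "isCont (\<lambda>y. if y \<le> c then f y else g y) y"
proof -
  have "isCont f y \<longleftrightarrow> isCont (\<lambda>y. if y \<le> c then f y else g y) y"
    by (rule isCont_cong) (rule eventually_mono[OF eventually_nhds_in_open[of "{..<c}"]], use assms in auto)
  with assms show ?thesis by simp
qed

lemma piece_cont_right:
  fixes f g :: "real \<Rightarrow> complex"
  assumes "y > c" "isCont g y"
  shows "isCont (\<lambda>y. if y \<le> c then f y else g y) y"
proof -
  have "isCont g y \<longleftrightarrow> isCont (\<lambda>y. if y \<le> c then f y else g y) y"
    by (rule isCont_cong) (rule eventually_mono[OF eventually_nhds_in_open[of "{c<..}"]], use assms in auto)
  with assms show ?thesis by simp
qed

context
  fixes k1 k2 d xi delta :: real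
  assumes dpos: "0 < d" and delpos: "0 < delta"
begin

definition "ka = kz k1 xi delta"
definition "mu = csqrt (complex_of_real (k2\<^sup>2 - xi\<^sup>2) + \<i> * complex_of_real delta)"

lemma ka_sq: "ka\<^sup>2 = complex_of_real (k1\<^sup>2 - xi\<^sup>2) + \<i> * complex_of_real delta"
  by (simp add: ka_def kz_def)
lemma mu_sq: "mu\<^sup>2 = complex_of_real (k2\<^sup>2 - xi\<^sup>2) + \<i> * complex_of_real delta"
  by (simp add: mu_def)
lemma ka_nz: "ka \<noteq> 0"
proof
  assume "ka = 0"
  then have "ka\<^sup>2 = 0" by simp
  then have "Im (ka\<^sup>2) = 0" by simp
  with delpos show False by (simp add: ka_sq)
qed
lemma mu_nz: "mu \<noteq> 0"
proof
  assume "mu = 0"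
  then have "mu\<^sup>2 = 0" by simp
  then have "Im (mu\<^sup>2) = 0" by simp
  with delpos show False by (simp add: mu_sq)
qed

definition "RR x = exp (\<i> * complex_of_real x * ka)"
definition "RR' x = \<i> * ka * RR x"

lemma RR_deriv: "(RR has_vector_derivative RR' x) (at x)"
proof -
  have "((\<lambda>z. exp (\<i> * z * ka)) has_field_derivative RR' x) (at (of_real x))"
    by (auto intro!: derivative_eq_intros simp: RR'_def RR_def)
  moreover have "RR = (\<lambda>x. exp (\<i> * complex_of_real x * ka))" by (simp add: fun_eq_iff RR_def)
  ultimately show ?thesis using has_vector_derivative_real_field[of _ _ x UNIV] by simp
qed

lemma RR'_deriv: "(RR' has_vector_derivative (- (ka\<^sup>2) * RR x)) (at x)"
proof -
  have "((\<lambda>z. \<i> * ka * exp (\<i> * z * ka)) has_field_derivative (- (ka\<^sup>2) * RR x)) (at (of_real x))"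
    by (auto intro!: derivative_eq_intros simp: RR_def power2_eq_square mult_ac)
  moreover have "RR' = (\<lambda>x. \<i> * ka * exp (\<i> * complex_of_real x * ka))" by (simp add: fun_eq_iff RR'_def RR_def)
  ultimately show ?thesis using has_vector_derivative_real_field[of _ _ x UNIV] by simp
qed

definition "MM = gsol mu d (RR d) (RR' d)"
definition "MM' = gsol' mu d (RR d) (RR' d)"
definition "LL = gsol ka (-d) (MM (-d)) (MM' (-d))"
definition "LL' = gsol' ka (-d) (MM (-d)) (MM' (-d))"
definition "inn = (\<lambda>y. if y \<le> d then MM y else RR y)"
definition "inn' = (\<lambda>y. if y \<le> d then MM' y else RR' y)"
definition "up = (\<lambda>y. if y \<le> -d then LL y else inn y)"
definition "up' = (\<lambda>y. if y \<le> -d then LL' y else inn' y)"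

lemma MM_deriv: "(MM has_vector_derivative MM' x) (at x)"
  unfolding MM_def MM'_def by (rule gsol_deriv[OF mu_nz])
lemma MM'_deriv: "(MM' has_vector_derivative (- (mu\<^sup>2) * MM x)) (at x)"
  unfolding MM_def MM'_def by (rule gsol'_deriv)
lemma LL_deriv: "(LL has_vector_derivative LL' x) (at x)"
  unfolding LL_def LL'_def by (rule gsol_deriv[OF ka_nz])
lemma LL'_deriv: "(LL' has_vector_derivative (- (ka\<^sup>2) * LL x)) (at x)"
  unfolding LL_def LL'_def by (rule gsol'_deriv)

lemma inn_deriv: "(inn has_vector_derivative inn' x) (at x)"
proof -
  consider "x < d" | "x = d" | "x > d" by linarith
  then show ?thesis
  proof cases
    case 1 then show ?thesis unfolding inn_def inn'_def
      using piece_deriv_left[OF 1 MM_deriv] by simp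
  next
    case 2 
    have "(RR has_vector_derivative MM' d) (at d)" using RR_deriv[of d] by (simp add: MM'_def)
    then show ?thesis unfolding inn_def inn'_def
      using glue_deriv[OF MM_deriv[of d], of RR] 2 by (simp add: MM_def MM'_def)
  next
    case 3 then show ?thesis unfolding inn_def inn'_def
      using piece_deriv_right[OF 3 RR_deriv] by simp
  qed
qed

lemma up_deriv: "(up has_vector_derivative up' x) (at x)"
proof -
  consider "x < -d" | "x = -d" | "x > -d" by linarith
  then show ?thesis
  proof cases
    case 1 then show ?thesis unfolding up_def up'_def
      using piece_deriv_left[OF 1 LL_deriv] by simp
  next
    case 2 
    have "inn' (-d) = MM' (-d)" "inn (-d) = MM (-d)" using dpos by (auto simp: inn'_def inn_def)
    have "(inn has_vector_derivative LL' (-d)) (at (-d))" using inn_deriv[of "-d"] \<open>inn' (-d) = MM' (-d)\<close>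
      by (simp add: LL'_def)
    then show ?thesis unfolding up_def up'_def
      using glue_deriv[OF LL_deriv[of "-d"], of inn] 2 \<open>inn (-d) = MM (-d)\<close> by (simp add: LL_def LL'_def)
  next
    case 3 then show ?thesis unfolding up_def up'_def
      using piece_deriv_right[OF 3 inn_deriv] by simp
  qed
qed

lemma inn'_cont: "isCont inn' x"
proof -
  consider "x < d" | "x = d" | "x > d" by linarith
  then show ?thesis
  proof cases
    case 1 then show ?thesis unfolding inn'_def
      using piece_cont_left[OF 1 has_vector_derivative_continuous[OF MM'_deriv]] by simp
  next
    case 2 then show ?thesis unfolding inn'_def
      using glue_cont[OF has_vector_derivative_continuous[OF MM'_deriv] has_vector_derivative_continuous[OF RR'_deriv], of d]
      by (simp add: MM_def MM'_def)
  next
    case 3 then show ?thesis unfolding inn'_def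
      using piece_cont_right[OF 3 has_vector_derivative_continuous[OF RR'_deriv]] by simp
  qed
qed

lemma up'_cont: "isCont up' x"
proof -
  consider "x < -d" | "x = -d" | "x > -d" by linarith
  then show ?thesis
  proof cases
    case 1 then show ?thesis unfolding up'_def
      using piece_cont_left[OF 1 has_vector_derivative_continuous[OF LL'_deriv]] by simp
  next
    case 2 
    have "inn' (-d) = MM' (-d)" using dpos by (auto simp: inn'_def)
    then show ?thesis unfolding up'_def
      using glue_cont[OF has_vector_derivative_continuous[OF LL'_deriv] inn'_cont, of "-d"] 2
      by (simp add: LL_def LL'_def)
  next
    case 3 then show ?thesis unfolding up'_def
      using piece_cont_right[OF 3 inn'_cont] by simp
  qed
qed

lemma qpot_out: "x < -d \<or> x > d \<Longrightarrow> qpot k1 k2 d x = 0"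
  by (auto simp: qpot_def indicator_def)
lemma qpot_in: "-d \<le> x \<Longrightarrow> x \<le> d \<Longrightarrow> qpot k1 k2 d x = k2\<^sup>2 - k1\<^sup>2"
  by (auto simp: qpot_def indicator_def)

lemma up'_deriv:
  assumes "x \<noteq> d" "x \<noteq> -d"
  shows "(up' has_vector_derivative
     (- (complex_of_real (k1\<^sup>2 + qpot k1 k2 d x - xi\<^sup>2) + \<i> * complex_of_real delta) * up x)) (at x)"
proof -
  consider "x < -d" | "-d < x" "x < d" | "x > d" using assms by linarith
  then show ?thesis
  proof cases
    case 1 
    have "(up' has_vector_derivative (- (ka\<^sup>2) * LL x)) (at x)"
      unfolding up'_def using piece_deriv_left[OF 1 LL'_deriv] by simp
    then show ?thesis using 1 by (simp add: qpot_out ka_sq up_def)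
  next
    case 2
    have "(inn' has_vector_derivative (- (mu\<^sup>2) * MM x)) (at x)"
      unfolding inn'_def using piece_deriv_left[OF 2(2) MM'_deriv] by simp
    then have "(up' has_vector_derivative (- (mu\<^sup>2) * MM x)) (at x)"
      unfolding up'_def using piece_deriv_right[OF 2(1)] by simp
    then show ?thesis using 2 by (simp add: qpot_in mu_sq up_def inn_def)
  next
    case 3
    have "(inn' has_vector_derivative (- (ka\<^sup>2) * RR x)) (at x)"
      unfolding inn'_def using piece_deriv_right[OF 3 RR'_deriv] by simp
    then have "(up' has_vector_derivative (- (ka\<^sup>2) * RR x)) (at x)"
      unfolding up'_def using piece_deriv_right[of "-d" x] 3 dpos by simp
    then show ?thesis using 3 dpos by (simp add: qpot_out ka_sq up_def inn_def)
  qed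
qed

lemma up_is_sol: "is_sol k1 k2 d xi delta up"
  unfolding is_sol_def
proof (intro exI[of _ up'] conjI allI impI)
  show "continuous_on UNIV up'" by (intro continuous_at_imp_continuous_on ballI up'_cont)
  show "\<And>x. (up has_vector_derivative up' x) (at x)" by (rule up_deriv)
qed (rule up'_deriv, auto)

lemma up_tail: "x > d \<Longrightarrow> up x = exp (\<i> * complex_of_real x * kz k1 xi delta)"
  using dpos by (simp add: up_def inn_def RR_def ka_def)

end


lemma ode_zero_on:
  fixes w w' :: "real \<Rightarrow> complex"
  assumes m: "m \<noteq> 0" and S: "convex S" and b: "b \<in> closure S"
    and der: "\<And>x. x \<in> S \<Longrightarrow> (w has_vector_derivative w' x) (at x) \<and> (w' has_vector_derivative (- (m\<^sup>2) * w x)) (at x)"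
    and cw: "continuous_on UNIV w" and cw': "continuous_on UNIV w'"
    and wb: "w b = 0" and wb': "w' b = 0"
    and x: "x \<in> S"
  shows "w x = 0 \<and> w' x = 0"
proof -
  define s1 where "s1 = gsol m b 1 0"
  define s1' where "s1' = gsol' m b 1 0"
  define s2 where "s2 = gsol m b 0 1"
  define s2' where "s2' = gsol' m b 0 1"
  have phi0: "\<forall>y\<in>S. w y * s' y - w' y * s y = 0"
    if sd: "\<And>y. (s has_vector_derivative s' y) (at y)" and sd': "\<And>y. (s' has_vector_derivative (- (m\<^sup>2) * s y)) (at y)"
      and cs: "continuous_on UNIV s" "continuous_on UNIV s'" and sb: "s b = 1 \<or> s b = 0" "s' b = 0 \<or> s' b = 1"
    for s s' :: "real \<Rightarrow> complex"
  proof -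
    have hd: "((\<lambda>y. w y * s' y - w' y * s y) has_vector_derivative 0) (at y within S)" if "y \<in> S" for y
    proof -
      have "((\<lambda>y. w y * s' y - w' y * s y) has_vector_derivative
         (w y * (- (m\<^sup>2) * s y) + w' y * s' y - (w' y * s' y + (- (m\<^sup>2) * w y) * s y))) (at y)"
        using der[OF that] sd[of y] sd'[of y] by (intro has_vector_derivative_diff has_vector_derivative_mult) auto
      moreover have "w y * (- (m\<^sup>2) * s y) + w' y * s' y - (w' y * s' y + (- (m\<^sup>2) * w y) * s y) = 0"
        by (simp add: algebra_simps)
      ultimately show ?thesis using has_vector_derivative_at_within by fastforce
    qed
    obtain c0 where c0: "\<And>y. y \<in> S \<Longrightarrow> w y * s' y - w' y * s y = c0"
      using has_vector_derivative_zero_constant[OF S hd] by metis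
    have "\<exists>c. \<forall>y\<in>S. w y * s' y - w' y * s y = c" using c0 by blast
    then obtain c where c: "\<forall>y\<in>S. w y * s' y - w' y * s y = c" by blast
    have "continuous_on UNIV (\<lambda>y. w y * s' y - w' y * s y)"
      by (intro continuous_on_diff continuous_on_mult cw cw' cs)
    then have cc: "continuous_on (closure S) (\<lambda>y. w y * s' y - w' y * s y)"
      by (rule continuous_on_subset) simp
    have "w b * s' b - w' b * s b = c" by (rule continuous_constant_on_closure[OF cc _ b]) (use c in auto)
    with wb wb' have "c = 0" by simp
    with c show ?thesis by simp
  qed
  have cg: "continuous_on UNIV (gsol m b \<alpha> \<beta>)" "continuous_on UNIV (gsol' m b \<alpha> \<beta>)" for \<alpha> \<beta>
    by (intro continuous_at_imp_continuous_on ballI has_vector_derivative_continuous[OF gsol_deriv[OF m]]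
        has_vector_derivative_continuous[OF gsol'_deriv])+
  have p1: "\<forall>y\<in>S. w y * s1' y - w' y * s1 y = 0"
    unfolding s1_def s1'_def
  proof (rule phi0)
    show "\<And>y. (gsol m b 1 0 has_vector_derivative gsol' m b 1 0 y) (at y)" by (rule gsol_deriv[OF m])
    show "\<And>y. (gsol' m b 1 0 has_vector_derivative - (m\<^sup>2) * gsol m b 1 0 y) (at y)" by (rule gsol'_deriv)
  qed (simp_all add: cg)
  have p2: "\<forall>y\<in>S. w y * s2' y - w' y * s2 y = 0"
    unfolding s2_def s2'_def
  proof (rule phi0)
    show "\<And>y. (gsol m b 0 1 has_vector_derivative gsol' m b 0 1 y) (at y)" by (rule gsol_deriv[OF m])
    show "\<And>y. (gsol' m b 0 1 has_vector_derivative - (m\<^sup>2) * gsol m b 0 1 y) (at y)" by (rule gsol'_deriv)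
  qed (simp_all add: cg)
  have id: "s1 y * s2' y - s1' y * s2 y = 1" for y
  proof -
    show ?thesis
      using m sin_cos_squared_add[of "m * (complex_of_real y - complex_of_real b)"]
      unfolding s1_def s2_def s1'_def s2'_def gsol_def gsol'_def
      by (simp add: power2_eq_square)
  qed
  have e1: "w x * (s1 x * s2' x - s1' x * s2 x) = (w x * s2' x - w' x * s2 x) * s1 x - (w x * s1' x - w' x * s1 x) * s2 x"
    by (simp add: algebra_simps)
  have e2: "w' x * (s1 x * s2' x - s1' x * s2 x) = (w x * s2' x - w' x * s2 x) * s1' x - (w x * s1' x - w' x * s1 x) * s2' x"
    by (simp add: algebra_simps)
  have z1: "w x * s2' x - w' x * s2 x = 0" "w x * s1' x - w' x * s1 x = 0" using p1 p2 x by auto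
  show ?thesis using e1 e2 id[of x] unfolding z1 by simp
qed



abbreviation cf :: "real \<Rightarrow> real \<Rightarrow> real \<Rightarrow> real \<Rightarrow> real \<Rightarrow> real \<Rightarrow> complex" where
  "cf k1 k2 d xi delta x \<equiv> complex_of_real (k1\<^sup>2 + qpot k1 k2 d x - xi\<^sup>2) + \<i> * complex_of_real delta"

lemma is_solE:
  assumes "is_sol k1 k2 d xi delta u"
  obtains u' where "\<And>x. (u has_vector_derivative u' x) (at x)" "continuous_on UNIV u'"
    "\<And>x. x \<noteq> d \<Longrightarrow> x \<noteq> -d \<Longrightarrow> (u' has_vector_derivative (- cf k1 k2 d xi delta x * u x)) (at x)"
  using assms unfolding is_sol_def by blast

lemma is_sol_diff:
  assumes "is_sol k1 k2 d xi delta u" "is_sol k1 k2 d xi delta v"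
  shows "is_sol k1 k2 d xi delta (\<lambda>x. u x - v x)"
proof -
  obtain u' where u1: "\<And>x. (u has_vector_derivative u' x) (at x)" and u2: "continuous_on UNIV u'"
    and u3: "\<And>x. x \<noteq> d \<Longrightarrow> x \<noteq> -d \<Longrightarrow> (u' has_vector_derivative (- cf k1 k2 d xi delta x * u x)) (at x)"
    using is_solE[OF assms(1)] by blast
  obtain v' where v1: "\<And>x. (v has_vector_derivative v' x) (at x)" and v2: "continuous_on UNIV v'"
    and v3: "\<And>x. x \<noteq> d \<Longrightarrow> x \<noteq> -d \<Longrightarrow> (v' has_vector_derivative (- cf k1 k2 d xi delta x * v x)) (at x)"
    using is_solE[OF assms(2)] by blast
  show ?thesis unfolding is_sol_def
  proof (intro exI[of _ "\<lambda>x. u' x - v' x"] conjI allI impI)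
    fix x show "((\<lambda>x. u x - v x) has_vector_derivative u' x - v' x) (at x)"
      using u1 v1 by (rule has_vector_derivative_diff)
  next
    show "continuous_on UNIV (\<lambda>x. u' x - v' x)" using u2 v2 by (rule continuous_on_diff)
  next
    fix x assume "x \<noteq> d \<and> x \<noteq> -d"
    then have "((\<lambda>x. u' x - v' x) has_vector_derivative (- cf k1 k2 d xi delta x * u x) - (- cf k1 k2 d xi delta x * v x)) (at x)"
      using u3 v3 by (intro has_vector_derivative_diff) auto
    then show "((\<lambda>x. u' x - v' x) has_vector_derivative (- cf k1 k2 d xi delta x * (u x - v x))) (at x)"
      by (simp add: algebra_simps)
  qed
qed

lemma qpot_minus: "qpot k1 k2 d (-x) = qpot k1 k2 d x"
  by (auto simp: qpot_def indicator_def)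

lemma is_sol_reflect:
  assumes "is_sol k1 k2 d xi delta u"
  shows "is_sol k1 k2 d xi delta (\<lambda>x. u (-x))"
proof -
  obtain u' where u1: "\<And>x. (u has_vector_derivative u' x) (at x)" and u2: "continuous_on UNIV u'"
    and u3: "\<And>x. x \<noteq> d \<Longrightarrow> x \<noteq> -d \<Longrightarrow> (u' has_vector_derivative (- cf k1 k2 d xi delta x * u x)) (at x)"
    using is_solE[OF assms(1)] by blast
  have m: "((\<lambda>x::real. -x) has_vector_derivative -1) (at x)" for x
    using has_real_derivative_iff_has_vector_derivative[THEN iffD1, OF DERIV_minus[OF DERIV_ident]] by simp
  show ?thesis unfolding is_sol_def
  proof (intro exI[of _ "\<lambda>x. - u' (-x)"] conjI allI impI)
    fix x show "((\<lambda>x. u (-x)) has_vector_derivative - u' (- x)) (at x)"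
      using vector_diff_chain_at[OF m u1] by (simp add: o_def)
  next
    have "continuous_on UNIV (\<lambda>x. u' (-x))"
      by (rule continuous_on_compose2[OF u2]) (auto intro: continuous_intros)
    then show "continuous_on UNIV (\<lambda>x. - u' (-x))" by (rule continuous_on_minus)
  next
    fix x assume "x \<noteq> d \<and> x \<noteq> -d"
    then have "((\<lambda>x. u' (-x)) has_vector_derivative (-1) *\<^sub>R (- cf k1 k2 d xi delta (-x) * u (-x))) (at x)"
      using vector_diff_chain_at[OF m u3[of "-x"]] by (simp add: o_def)
    then have "((\<lambda>x. - u' (-x)) has_vector_derivative - ((-1) *\<^sub>R (- cf k1 k2 d xi delta (-x) * u (-x)))) (at x)"
      by (rule has_vector_derivative_minus)
    then show "((\<lambda>x. - u' (-x)) has_vector_derivative (- cf k1 k2 d xi delta x * u (-x))) (at x)"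
      by (simp add: qpot_minus)
  qed
qed

context
  fixes k1 k2 d xi delta :: real
  assumes dpos: "0 < d" and delpos: "0 < delta"
begin

lemma sol_zero:
  assumes sol: "is_sol k1 k2 d xi delta w" and tail: "\<And>x. x > d \<Longrightarrow> w x = 0"
  shows "w x = 0"
proof -
  obtain w' where w1: "\<And>x. (w has_vector_derivative w' x) (at x)" and cw': "continuous_on UNIV w'"
    and w3: "\<And>x. x \<noteq> d \<Longrightarrow> x \<noteq> -d \<Longrightarrow> (w' has_vector_derivative (- cf k1 k2 d xi delta x * w x)) (at x)"
    using is_solE[OF sol] by blast
  have cw: "continuous_on UNIV w"
    by (intro continuous_at_imp_continuous_on ballI has_vector_derivative_continuous[OF w1])
  have w'0: "w' x = 0" if "x > d" for x
  proof -
    have "((\<lambda>_. 0) has_vector_derivative 0) (at x)" by simp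
    then have "(w has_vector_derivative 0) (at x)"
      by (rule has_vector_derivative_transform_within_open[of _ _ _ "{d<..}"]) (use that tail in auto)
    then show ?thesis using vector_derivative_unique_at[OF w1[of x]] by simp
  qed
  have wd: "w d = 0" "w' d = 0"
    by (rule continuous_constant_on_closure[of "{d<..}"], use cw cw' continuous_on_subset tail w'0 in auto)+
  have mid: "w y = 0 \<and> w' y = 0" if "y \<in> {-d<..<d}" for y
  proof (rule ode_zero_on[OF mu_nz[OF dpos delpos] convex_real_interval(8) _ _ cw cw' wd that])
    show "d \<in> closure {- d<..<d}" using dpos by simp
    fix x assume x: "x \<in> {-d<..<d}"
    then have "cf k1 k2 d xi delta x = (mu k2 xi delta)\<^sup>2"
      by (simp add: qpot_in[OF dpos delpos] mu_sq[OF dpos delpos])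
    then show "(w has_vector_derivative w' x) (at x) \<and>
      (w' has_vector_derivative - (mu k2 xi delta)\<^sup>2 * w x) (at x)"
      using w1 w3[of x] x by auto
  qed
  have wmd: "w (-d) = 0" "w' (-d) = 0"
    by (rule continuous_constant_on_closure[of "{-d<..<d}"], use cw cw' continuous_on_subset mid dpos in auto)+
  have left: "w y = 0 \<and> w' y = 0" if "y \<in> {..<-d}" for y
  proof (rule ode_zero_on[OF ka_nz[OF dpos delpos] convex_real_interval(4) _ _ cw cw' wmd that])
    show "-d \<in> closure {..<-d}" by simp
    fix x assume x: "x \<in> {..<-d}"
    then have "cf k1 k2 d xi delta x = (ka k1 xi delta)\<^sup>2"
      by (simp add: qpot_out[OF dpos delpos] ka_sq[OF dpos delpos])
    then show "(w has_vector_derivative w' x) (at x) \<and>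
      (w' has_vector_derivative - (ka k1 xi delta)\<^sup>2 * w x) (at x)"
      using w1 w3[of x] x dpos by auto
  qed
  consider "x > d" | "x = d" | "x \<in> {-d<..<d}" | "x = -d" | "x \<in> {..<-d}" by force
  then show ?thesis using tail wd mid wmd left by cases auto
qed

lemma up_unique:
  assumes "is_sol k1 k2 d xi delta v" "\<And>x. x > d \<Longrightarrow> v x = exp (\<i> * complex_of_real x * kz k1 xi delta)"
  shows "v = up k1 k2 d xi delta"
proof -
  have "is_sol k1 k2 d xi delta (\<lambda>x. v x - up k1 k2 d xi delta x)"
    by (rule is_sol_diff[OF assms(1) up_is_sol[OF dpos delpos]])
  moreover have "\<And>x. x > d \<Longrightarrow> v x - up k1 k2 d xi delta x = 0"
    using assms(2) up_tail[OF dpos delpos] by simp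
  ultimately have "v x - up k1 k2 d xi delta x = 0" for x by (rule sol_zero)
  then show ?thesis by (simp add: fun_eq_iff)
qed

lemma u_plus_eq: "u_plus k1 k2 d xi delta = up k1 k2 d xi delta"
  unfolding u_plus_def
proof (rule the_equality)
  show "is_sol k1 k2 d xi delta (up k1 k2 d xi delta) \<and>
    (\<forall>x>d. up k1 k2 d xi delta x = exp (\<i> * complex_of_real x * kz k1 xi delta))"
    using up_is_sol[OF dpos delpos] up_tail[OF dpos delpos] by auto
qed (use up_unique in auto)

lemma u_minus_eq: "u_minus k1 k2 d xi delta = (\<lambda>x. up k1 k2 d xi delta (-x))"
  unfolding u_minus_def
proof (rule the_equality)
  show "is_sol k1 k2 d xi delta (\<lambda>x. up k1 k2 d xi delta (-x)) \<and>
    (\<forall>x< -d. up k1 k2 d xi delta (-x) = exp (- \<i> * complex_of_real x * kz k1 xi delta))"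
    using is_sol_reflect[OF up_is_sol[OF dpos delpos]] up_tail[OF dpos delpos] by auto
next
  fix v assume v: "is_sol k1 k2 d xi delta v \<and> (\<forall>x< -d. v x = exp (- \<i> * complex_of_real x * kz k1 xi delta))"
  have "(\<lambda>x. v (-x)) = up k1 k2 d xi delta"
    by (rule up_unique) (use v is_sol_reflect in auto)
  then show "v = (\<lambda>x. up k1 k2 d xi delta (-x))" by (metis (no_types) minus_minus)
qed

end


definition Sd :: "real \<Rightarrow> complex \<Rightarrow> complex" where
  "Sd d m = (if m = 0 then complex_of_real d else sin (m * complex_of_real d) / m)"
definition F1 :: "real \<Rightarrow> complex \<Rightarrow> complex \<Rightarrow> complex" where
  "F1 d k m = cos (m * complex_of_real d) - \<i> * k * Sd d m"
definition F2 :: "real \<Rightarrow> complex \<Rightarrow> complex \<Rightarrow> complex" where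
  "F2 d k m = m * sin (m * complex_of_real d) + \<i> * k * cos (m * complex_of_real d)"
definition PP :: "real \<Rightarrow> complex \<Rightarrow> complex \<Rightarrow> complex" where
  "PP d k m = 2 * exp (2 * \<i> * complex_of_real d * k) * F1 d k m * F2 d k m"

context
  fixes k1 k2 d xi delta :: real
  assumes dpos: "0 < d" and delpos: "0 < delta"
begin

lemma Wr_up: "Wr k1 k2 d xi delta = 2 * up k1 k2 d xi delta 0 * up' k1 k2 d xi delta 0"
proof -
  have m: "((\<lambda>x::real. -x) has_vector_derivative -1) (at x)" for x
    using has_real_derivative_iff_has_vector_derivative[THEN iffD1, OF DERIV_minus[OF DERIV_ident]] by simp
  have d1: "vector_derivative (up k1 k2 d xi delta) (at 0) = up' k1 k2 d xi delta 0"
    by (rule vector_derivative_at[OF up_deriv[OF dpos delpos]])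
  have "((\<lambda>x. up k1 k2 d xi delta (-x)) has_vector_derivative - up' k1 k2 d xi delta 0) (at 0)"
    using vector_diff_chain_at[OF m[of 0], of "up k1 k2 d xi delta" "up' k1 k2 d xi delta 0"]
      up_deriv[OF dpos delpos, of k1 k2 xi 0] by (simp add: o_def)
  then have d2: "vector_derivative (\<lambda>x. up k1 k2 d xi delta (-x)) (at 0) = - up' k1 k2 d xi delta 0"
    by (rule vector_derivative_at)
  show ?thesis unfolding Wr_def u_plus_eq[OF dpos delpos] u_minus_eq[OF dpos delpos] d1 d2
    by simp
qed

lemma Wr_formula: "Wr k1 k2 d xi delta = PP d (kz k1 xi delta) (mu k2 xi delta)"
proof -
  let ?k = "kz k1 xi delta" and ?m = "mu k2 xi delta"
  have mnz: "?m \<noteq> 0" by (rule mu_nz[OF dpos delpos])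
  have R: "RR k1 xi delta d = exp (\<i> * complex_of_real d * ?k)"
    by (simp add: RR_def[OF dpos delpos] ka_def[OF dpos delpos])
  have R': "RR' k1 xi delta d = \<i> * ?k * exp (\<i> * complex_of_real d * ?k)"
    by (simp add: RR'_def[OF dpos delpos] R ka_def[OF dpos delpos])
  have u0: "up k1 k2 d xi delta 0 = exp (\<i> * complex_of_real d * ?k) * F1 d ?k ?m"
    using dpos mnz
    by (simp add: up_def[OF dpos delpos] inn_def[OF dpos delpos] MM_def[OF dpos delpos] gsol_def R R'
        F1_def Sd_def algebra_simps)
  have u0': "up' k1 k2 d xi delta 0 = exp (\<i> * complex_of_real d * ?k) * F2 d ?k ?m"
    using dpos mnz
    by (simp add: up'_def[OF dpos delpos] inn'_def[OF dpos delpos] MM'_def[OF dpos delpos] gsol'_def R R'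
        F2_def algebra_simps)
  have ee: "exp (\<i> * complex_of_real d * ?k) * exp (\<i> * complex_of_real d * ?k) = exp (2 * \<i> * complex_of_real d * ?k)"
    by (simp add: exp_add[symmetric] algebra_simps)
  show ?thesis unfolding Wr_up u0 u0' PP_def using ee 
    by (simp add: algebra_simps)
qed

end


lemma sinh_bound:
  fixes y :: real assumes y: "y > 0"
  shows "exp y - exp (-y) > 2 * y"
proof -
  define a where "a = exp y"
  define A where "A = 1 + y + y\<^sup>2 / 2"
  have aA: "A \<le> a" unfolding a_def A_def using exp_lower_Taylor_quadratic[of y] y by simp
  have apos: "a > 0" unfolding a_def by simp
  have Ay: "A - y > 0" unfolding A_def by (simp add: add_pos_nonneg)
  have "(a - A) * (a + A - 2 * y) \<ge> 0" using aA Ay by (intro mult_nonneg_nonneg) auto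
  moreover have "A * A - 2 * y * A - 1 = y ^ 4 / 4" unfolding A_def by (simp add: algebra_simps power2_eq_square power4_eq_xxxx)
  moreover have "y ^ 4 / 4 > 0" using y by simp
  moreover have "a * a - 2 * y * a - 1 = (a - A) * (a + A - 2 * y) + (A * A - 2 * y * A - 1)" by (simp add: algebra_simps)
  ultimately have "a * a - 2 * y * a - 1 > 0" by linarith
  then have "(a * a - 1) / a > 2 * y" using apos by (simp add: field_simps)
  moreover have "(a * a - 1) / a = exp y - exp (-y)" unfolding a_def using apos by (simp add: field_simps exp_minus)
  ultimately show ?thesis by simp
qed

lemma csqrt_pos:
  assumes "Im z > 0"
  shows "Re (csqrt z) > 0" "Im (csqrt z) > 0"
proof -
  have "\<bar>Re z\<bar> < cmod z"
  proof -
    have "\<bar>Re z\<bar>\<^sup>2 < (Re z)\<^sup>2 + (Im z)\<^sup>2" using assms by simp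
    then have "\<bar>Re z\<bar> < sqrt ((Re z)\<^sup>2 + (Im z)\<^sup>2)" by (rule real_less_rsqrt)
    then show ?thesis by (simp add: cmod_def)
  qed
  then have "cmod z + Re z > 0" "cmod z - Re z > 0" by linarith+
  then show "Re (csqrt z) > 0" "Im (csqrt z) > 0" using assms by simp_all
qed

lemma key_ineq:
  fixes p q d s c E E' :: real
  assumes p: "p > 0" and q: "q > 0" and d: "d > 0"
    and s: "s = sin (p * d)" and c: "c = cos (p * d)" and E: "E = exp (q * d)" and E': "E' = exp (- (q * d))"
  shows "p * (E * E - E' * E') / 4 > \<bar>q * s * c\<bar>"
proof -
  have "E * E - E' * E' = exp (2 * (q * d)) - exp (- (2 * (q * d)))"
    unfolding E E' by (simp only: mult_2 minus_add_distrib exp_add)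
  also have "\<dots> > 2 * (2 * (q * d))" by (rule sinh_bound) (use q d in simp)
  finally have "E * E - E' * E' > 4 * (q * d)" by simp
  then have "p * (E * E - E' * E') > p * (4 * (q * d))" using p by (simp add: mult_strict_left_mono)
  then have 1: "p * (E * E - E' * E') / 4 > p * (q * d)" by simp
  have "\<bar>s * c\<bar> \<le> \<bar>s\<bar>" unfolding c by (simp add: abs_mult mult_left_le)
  also have "\<dots> \<le> \<bar>p * d\<bar>" unfolding s by (rule abs_sin_x_le_abs_x)
  finally have "\<bar>s * c\<bar> \<le> p * d" using p d by simp
  then have "q * \<bar>s * c\<bar> \<le> q * (p * d)" using q by (simp add: mult_left_mono)
  then have "\<bar>q * s * c\<bar> \<le> p * (q * d)" using q by (simp add: abs_mult algebra_simps)
  with 1 show ?thesis by linarith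
qed

lemma F12_nz:
  assumes k: "Re k \<ge> 0" and p: "Re m > 0" and q: "Im m > 0" and d: "d > 0"
  shows "F1 d k m \<noteq> 0" "F2 d k m \<noteq> 0"
proof -
  define z where "z = m * complex_of_real d"
  have mnz: "m \<noteq> 0" using p by auto
  define s where "s = sin (Re m * d)"
  define c where "c = cos (Re m * d)"
  define E where "E = exp (Im m * d)"
  define E' where "E' = exp (- (Im m * d))"
  have EE: "E * E' = 1" unfolding E_def E'_def by (simp add: exp_minus)
  have rez: "Re z = Re m * d" "Im z = Im m * d" unfolding z_def by simp_all
  have Rs: "Re (sin z) = s * (E + E') / 2" "Im (sin z) = c * (E - E') / 2"
    "Re (cos z) = c * (E + E') / 2" "Im (cos z) = s * (E' - E) / 2"
    unfolding s_def c_def E_def E'_def by (simp_all add: Re_sin Im_sin Re_cos Im_cos rez)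
  have ki: "Re m * (E * E - E' * E') / 4 > \<bar>Im m * s * c\<bar>"
    by (rule key_ineq[OF p q d s_def c_def E_def E'_def])
  have sc: "s * s + c * c = 1" unfolding s_def c_def by (simp add: power2_eq_square[symmetric])
  have A1: "Im (sin z) * Re (cos z) - Re (sin z) * Im (cos z) = (E * E - E' * E') / 4 * (s * s + c * c)"
    unfolding Rs by (simp add: field_simps)
  have A2: "Re (sin z) * Re (cos z) + Im (sin z) * Im (cos z) = s * c * (E * E')"
    unfolding Rs by (simp add: field_simps)
  have X: "Im (m * sin z * cnj (cos z)) = Re m * (E * E - E' * E') / 4 + Im m * s * c * (E * E')"
  proof -
    have "Im (m * sin z * cnj (cos z)) = Re m * (Im (sin z) * Re (cos z) - Re (sin z) * Im (cos z))
       + Im m * (Re (sin z) * Re (cos z) + Im (sin z) * Im (cos z))" by (simp add: algebra_simps)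
    then show ?thesis unfolding A1 A2 sc by simp
  qed
  have Y: "Im (m * cos z * cnj (sin z)) = - (Re m * (E * E - E' * E') / 4) + Im m * s * c * (E * E')"
  proof -
    have "Im (m * cos z * cnj (sin z)) = - Re m * (Im (sin z) * Re (cos z) - Re (sin z) * Im (cos z))
       + Im m * (Re (sin z) * Re (cos z) + Im (sin z) * Im (cos z))" by (simp add: algebra_simps)
    then show ?thesis unfolding A1 A2 sc by simp
  qed
  have XX: "Im (m * sin z * cnj (cos z)) > 0" using X ki EE by (simp add: abs_less_iff)
  have YY: "Im (m * cos z * cnj (sin z)) < 0" using Y ki EE by (simp add: abs_less_iff)
  show "F2 d k m \<noteq> 0"
  proof
    assume "F2 d k m = 0"
    then have "m * sin z + \<i> * k * cos z = 0" unfolding F2_def z_def .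
    then have "m * sin z = - (\<i> * k * cos z)" by (rule eq_neg_iff_add_eq_0[THEN iffD2])
    then have "m * sin z * cnj (cos z) = - (\<i> * k) * (cos z * cnj (cos z))" by (simp add: algebra_simps)
    also have "\<dots> = - (\<i> * k) * complex_of_real ((cmod (cos z))\<^sup>2)" by (simp only: complex_norm_square)
    finally have "Im (m * sin z * cnj (cos z)) = - Re k * (cmod (cos z))\<^sup>2" by simp
    moreover have "- Re k * (cmod (cos z))\<^sup>2 \<le> 0" using k by simp
    ultimately show False using XX by linarith
  qed
  show "F1 d k m \<noteq> 0"
  proof
    assume "F1 d k m = 0"
    then have "cos z - \<i> * k * (sin z / m) = 0" unfolding F1_def z_def Sd_def using mnz by simp
    then have "cos z = \<i> * k * (sin z / m)" by (rule right_minus_eq[THEN iffD1])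
    then have "m * cos z = \<i> * k * sin z" using mnz by (simp add: field_simps)
    then have "m * cos z * cnj (sin z) = (\<i> * k) * (sin z * cnj (sin z))" by (simp add: algebra_simps)
    also have "\<dots> = (\<i> * k) * complex_of_real ((cmod (sin z))\<^sup>2)" by (simp only: complex_norm_square)
    finally have "Im (m * cos z * cnj (sin z)) = Re k * (cmod (sin z))\<^sup>2" by simp
    moreover have "Re k * (cmod (sin z))\<^sup>2 \<ge> 0" using k by simp
    ultimately show False using YY by linarith
  qed
qed

lemma Wr_nz:
  assumes "0 < d" "0 < delta"
  shows "Wr k1 k2 d xi delta \<noteq> 0"
proof -
  have "Re (kz k1 xi delta) \<ge> 0" unfolding kz_def by (rule Re_csqrt)
  moreover have "Re (mu k2 xi delta) > 0" "Im (mu k2 xi delta) > 0"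
    unfolding mu_def[OF assms] using csqrt_pos[of "complex_of_real (k2\<^sup>2 - xi\<^sup>2) + \<i> * complex_of_real delta"] assms
    by simp_all
  ultimately have "F1 d (kz k1 xi delta) (mu k2 xi delta) \<noteq> 0" "F2 d (kz k1 xi delta) (mu k2 xi delta) \<noteq> 0"
    using F12_nz assms by blast+
  then show ?thesis unfolding Wr_formula[OF assms] PP_def by simp
qed



lemma csqrt_real: "csqrt (complex_of_real r) = Complex (sqrt ((\<bar>r\<bar> + r) / 2)) (sqrt ((\<bar>r\<bar> - r) / 2))"
  by (simp add: complex_eq_iff)

lemma csqrt_lim: "((\<lambda>t. csqrt (complex_of_real r + \<i> * complex_of_real t)) \<longlongrightarrow> csqrt (complex_of_real r)) (at_right 0)"
proof -
  let ?f = "\<lambda>t. Complex (sqrt ((sqrt (r\<^sup>2 + t\<^sup>2) + r) / 2)) (sqrt ((sqrt (r\<^sup>2 + t\<^sup>2) - r) / 2))"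
  have ev: "\<forall>\<^sub>F t in at_right 0. ?f t = csqrt (complex_of_real r + \<i> * complex_of_real t)"
    using eventually_at_right_less[of 0] by eventually_elim (simp add: complex_eq_iff cmod_def)
  have "(?f \<longlongrightarrow> Complex (sqrt ((sqrt (r\<^sup>2 + 0\<^sup>2) + r) / 2)) (sqrt ((sqrt (r\<^sup>2 + 0\<^sup>2) - r) / 2))) (at_right 0)"
    by (intro tendsto_intros tendsto_ident_at) auto
  then have "(?f \<longlongrightarrow> csqrt (complex_of_real r)) (at_right 0)" by (simp add: csqrt_real)
  then show ?thesis using ev by (rule Lim_transform_eventually)
qed

lemma isCont_Sd: "isCont (Sd d) z"
proof (cases "z = 0")
  case True
  have "((\<lambda>w. sin (w * complex_of_real d)) has_field_derivative complex_of_real d) (at 0)"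
    by (auto intro!: derivative_eq_intros)
  then have "((\<lambda>w. (sin (w * complex_of_real d) - sin (0 * complex_of_real d)) / (w - 0)) \<longlongrightarrow> complex_of_real d) (at 0)"
    unfolding has_field_derivative_iff .
  then have "((\<lambda>w. sin (w * complex_of_real d) / w) \<longlongrightarrow> complex_of_real d) (at 0)" by simp
  then have "(Sd d \<longlongrightarrow> complex_of_real d) (at 0)"
    by (rule Lim_transform_eventually) (auto simp: eventually_at_filter Sd_def)
  then show ?thesis using True by (simp add: isCont_def Sd_def)
next
  case False
  have c1: "isCont (\<lambda>w. sin (w * complex_of_real d) / w) z" using False by (intro continuous_intros) auto
  have ev: "\<forall>\<^sub>F w in nhds z. sin (w * complex_of_real d) / w = Sd d w"
    using t1_space_nhds[OF False] by eventually_elim (simp add: Sd_def)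
  show ?thesis using c1 isCont_cong[OF ev] by simp
qed

lemma tendsto_PP:
  assumes "(f \<longlongrightarrow> a) F" "(g \<longlongrightarrow> b) F"
  shows "((\<lambda>x. PP d (f x) (g x)) \<longlongrightarrow> PP d a b) F"
proof -
  have s: "((\<lambda>x. Sd d (g x)) \<longlongrightarrow> Sd d b) F" by (rule isCont_tendsto_compose[OF isCont_Sd assms(2)])
  have gd: "((\<lambda>x. g x * complex_of_real d) \<longlongrightarrow> b * complex_of_real d) F"
    by (rule tendsto_mult_right[OF assms(2)])
  have cs: "((\<lambda>x. cos (g x * complex_of_real d)) \<longlongrightarrow> cos (b * complex_of_real d)) F"
     "((\<lambda>x. sin (g x * complex_of_real d)) \<longlongrightarrow> sin (b * complex_of_real d)) F"
    by (rule isCont_tendsto_compose[OF isCont_cos gd], rule isCont_tendsto_compose[OF isCont_sin gd])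
  show ?thesis unfolding PP_def F1_def F2_def
    by (intro tendsto_intros s assms cs)
qed

definition WW :: "real \<Rightarrow> real \<Rightarrow> real \<Rightarrow> real \<Rightarrow> complex" where
  "WW k1 k2 d xi = PP d (csqrt (complex_of_real (k1\<^sup>2 - xi\<^sup>2))) (csqrt (complex_of_real (k2\<^sup>2 - xi\<^sup>2)))"

lemma Wr_tendsto:
  assumes d: "0 < d"
  shows "((\<lambda>t. Wr k1 k2 d xi t) \<longlongrightarrow> WW k1 k2 d xi) (at_right 0)"
proof -
  have ev: "\<forall>\<^sub>F t in at_right 0. PP d (csqrt (complex_of_real (k1\<^sup>2 - xi\<^sup>2) + \<i> * complex_of_real t))
      (csqrt (complex_of_real (k2\<^sup>2 - xi\<^sup>2) + \<i> * complex_of_real t)) = Wr k1 k2 d xi t"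
    using eventually_at_right_less[of 0] 
    by eventually_elim (simp add: Wr_formula[OF d] kz_def mu_def[OF d])
  have "((\<lambda>t. PP d (csqrt (complex_of_real (k1\<^sup>2 - xi\<^sup>2) + \<i> * complex_of_real t))
      (csqrt (complex_of_real (k2\<^sup>2 - xi\<^sup>2) + \<i> * complex_of_real t))) \<longlongrightarrow> WW k1 k2 d xi) (at_right 0)"
    unfolding WW_def by (intro tendsto_PP csqrt_lim)
  then show ?thesis using ev by (rule Lim_transform_eventually)
qed

lemma W0_eq: "0 < d \<Longrightarrow> W0 k1 k2 d xi = WW k1 k2 d xi"
  unfolding W0_def by (rule tendsto_Lim[OF trivial_limit_at_right_real Wr_tendsto])

lemma Z_iff: "0 < d \<Longrightarrow> ((\<lambda>t. Wr k1 k2 d xi t) \<longlongrightarrow> 0) (at_right 0) \<longleftrightarrow> WW k1 k2 d xi = 0"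
  using Wr_tendsto[of d k1 k2 xi] tendsto_unique[OF trivial_limit_at_right_real] by metis

lemma WW_cont: "continuous_on UNIV (WW k1 k2 d)"
proof -
  have c: "((\<lambda>y. csqrt (complex_of_real (c - y\<^sup>2))) \<longlongrightarrow> csqrt (complex_of_real (c - x\<^sup>2))) (at x)" for c x :: real
    unfolding csqrt_real by (intro tendsto_intros) auto
  show ?thesis unfolding continuous_on_def WW_def
    by (intro ballI tendsto_PP c)
qed



lemma cos_ofr: "cos (complex_of_real b * complex_of_real d) = complex_of_real (cos (b * d))"
  by (metis cos_of_real of_real_mult)
lemma sin_ofr: "sin (complex_of_real b * complex_of_real d) = complex_of_real (sin (b * d))"
  by (metis sin_of_real of_real_mult)

lemma PP_zero: "PP d k m = 0 \<Longrightarrow> F1 d k m = 0 \<or> F2 d k m = 0"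
  by (simp add: PP_def)

lemma F_real_nz:
  assumes "a \<noteq> 0" "b \<noteq> 0"
  shows "F1 d (complex_of_real a) (complex_of_real b) \<noteq> 0" "F2 d (complex_of_real a) (complex_of_real b) \<noteq> 0"
proof -
  have sc: "(sin (b * d))\<^sup>2 + (cos (b * d))\<^sup>2 = 1" by simp
  show "F1 d (complex_of_real a) (complex_of_real b) \<noteq> 0"
  proof
    assume "F1 d (complex_of_real a) (complex_of_real b) = 0"
    then have "Re (F1 d (complex_of_real a) (complex_of_real b)) = 0" "Im (F1 d (complex_of_real a) (complex_of_real b)) = 0" by simp_all
    then have "cos (b * d) = 0" "a * sin (b * d) / b = 0" using assms by (simp_all add: F1_def Sd_def cos_ofr sin_ofr)
    then show False using sc assms by simp
  qed
  show "F2 d (complex_of_real a) (complex_of_real b) \<noteq> 0"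
  proof
    assume "F2 d (complex_of_real a) (complex_of_real b) = 0"
    then have "Re (F2 d (complex_of_real a) (complex_of_real b)) = 0" "Im (F2 d (complex_of_real a) (complex_of_real b)) = 0" by simp_all
    then have "b * sin (b * d) = 0" "a * cos (b * d) = 0" using assms by (simp_all add: F2_def cos_ofr sin_ofr)
    then show False using sc assms by simp
  qed
qed

lemma F_crit:
  assumes s: "s > 0"
  shows "F1 d 0 (complex_of_real s) = complex_of_real (cos (s * d))"
    "F2 d 0 (complex_of_real s) = complex_of_real (s * sin (s * d))"
  using s by (simp_all add: F1_def F2_def cos_ofr sin_ofr)

lemma F_k2:
  assumes g: "g > 0" and d: "d > 0"
  shows "F1 d (\<i> * complex_of_real g) 0 \<noteq> 0" "F2 d (\<i> * complex_of_real g) 0 \<noteq> 0"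
proof -
  have "F1 d (\<i> * complex_of_real g) 0 = complex_of_real (1 + g * d)" by (simp add: F1_def Sd_def)
  then show "F1 d (\<i> * complex_of_real g) 0 \<noteq> 0" using g d
    by (metis add_pos_pos less_numeral_extra(1) mult_pos_pos of_real_eq_0_iff order_less_irrefl)
  have "F2 d (\<i> * complex_of_real g) 0 = complex_of_real (- g)" by (simp add: F2_def)
  then show "F2 d (\<i> * complex_of_real g) 0 \<noteq> 0" using g by simp
qed

lemma F_big:
  assumes g: "g > 0" and n: "n > 0" and d: "d > 0"
  shows "F1 d (\<i> * complex_of_real g) (\<i> * complex_of_real n) \<noteq> 0" "F2 d (\<i> * complex_of_real g) (\<i> * complex_of_real n) \<noteq> 0"
proof -
  define E where "E = exp (n * d)"
  define E' where "E' = exp (- (n * d))"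
  define z where "z = \<i> * complex_of_real n * complex_of_real d"
  have EE: "E' < E" unfolding E_def E'_def using n d by simp
  have Ep: "E' > 0" unfolding E'_def by simp
  have sz: "sin z = \<i> * complex_of_real ((E - E') / 2)"
    unfolding z_def E_def E'_def by (simp add: complex_eq_iff Re_sin Im_sin)
  have cz: "cos z = complex_of_real ((E + E') / 2)"
    unfolding z_def E_def E'_def by (simp add: complex_eq_iff Re_cos Im_cos)
  have nz: "\<i> * complex_of_real n \<noteq> 0" using n by simp
  have "F1 d (\<i> * complex_of_real g) (\<i> * complex_of_real n) = cos z + complex_of_real g * (sin z / (\<i> * complex_of_real n))"
    unfolding F1_def Sd_def z_def using nz by (simp add: algebra_simps)
  also have "\<dots> = complex_of_real ((E + E') / 2 + g * ((E - E') / 2) / n)"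
    unfolding sz cz using n by (simp add: field_simps)
  finally have f1: "F1 d (\<i> * complex_of_real g) (\<i> * complex_of_real n) = complex_of_real ((E + E') / 2 + g * ((E - E') / 2) / n)" .
  have "(E + E') / 2 + g * ((E - E') / 2) / n > 0" using EE Ep g n by (simp add: add_pos_pos)
  then show "F1 d (\<i> * complex_of_real g) (\<i> * complex_of_real n) \<noteq> 0" unfolding f1
    by (metis of_real_eq_0_iff order_less_irrefl)
  have "F2 d (\<i> * complex_of_real g) (\<i> * complex_of_real n) = \<i> * complex_of_real n * sin z + \<i> * (\<i> * complex_of_real g) * cos z"
    unfolding F2_def z_def by (simp add: algebra_simps)
  also have "\<dots> = complex_of_real (- (n * ((E - E') / 2)) - g * ((E + E') / 2))"
    unfolding sz cz by (simp add: field_simps)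
  finally have f2: "F2 d (\<i> * complex_of_real g) (\<i> * complex_of_real n) = complex_of_real (- (n * ((E - E') / 2)) - g * ((E + E') / 2))" .
  have "n * ((E - E') / 2) > 0" "g * ((E + E') / 2) > 0" using EE Ep g n by simp_all
  then have "- (n * ((E - E') / 2)) - g * ((E + E') / 2) < 0" by linarith
  then show "F2 d (\<i> * complex_of_real g) (\<i> * complex_of_real n) \<noteq> 0" unfolding f2
    by (metis of_real_eq_0_iff order_less_irrefl)
qed

definition gam :: "real \<Rightarrow> real \<Rightarrow> real" where "gam k1 x = sqrt (x\<^sup>2 - k1\<^sup>2)"
definition bb :: "real \<Rightarrow> real \<Rightarrow> real" where "bb k2 x = sqrt (k2\<^sup>2 - x\<^sup>2)"
definition f1 :: "real \<Rightarrow> real \<Rightarrow> real \<Rightarrow> real \<Rightarrow> real" where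
  "f1 k1 k2 d x = cos (bb k2 x * d) + gam k1 x * sin (bb k2 x * d) / bb k2 x"
definition f2 :: "real \<Rightarrow> real \<Rightarrow> real \<Rightarrow> real \<Rightarrow> real" where
  "f2 k1 k2 d x = bb k2 x * sin (bb k2 x * d) - gam k1 x * cos (bb k2 x * d)"
definition gg :: "real \<Rightarrow> real \<Rightarrow> real \<Rightarrow> real \<Rightarrow> real" where
  "gg k1 k2 d x = 2 * exp (- (2 * d * gam k1 x)) * f1 k1 k2 d x * f2 k1 k2 d x"

lemma WW_region:
  assumes "k1\<^sup>2 < x\<^sup>2" "x\<^sup>2 < k2\<^sup>2"
  shows "WW k1 k2 d x = complex_of_real (gg k1 k2 d x)"
proof -
  have b: "bb k2 x > 0" unfolding bb_def using assms by simp
  have k: "csqrt (complex_of_real (k1\<^sup>2 - x\<^sup>2)) = \<i> * complex_of_real (gam k1 x)"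
    using assms unfolding gam_def by (simp add: csqrt_of_real_nonpos del: of_real_diff of_real_power)
  have m: "csqrt (complex_of_real (k2\<^sup>2 - x\<^sup>2)) = complex_of_real (bb k2 x)"
    using assms unfolding bb_def by (simp add: csqrt_of_real)
  have e: "2 * \<i> * complex_of_real d * (\<i> * complex_of_real (gam k1 x)) = complex_of_real (- (2 * d * gam k1 x))"
    by (simp add: complex_eq_iff)
  have "F1 d (\<i> * complex_of_real (gam k1 x)) (complex_of_real (bb k2 x)) = complex_of_real (f1 k1 k2 d x)"
    using b by (simp add: F1_def Sd_def f1_def cos_ofr sin_ofr)
  moreover have "F2 d (\<i> * complex_of_real (gam k1 x)) (complex_of_real (bb k2 x)) = complex_of_real (f2 k1 k2 d x)"
    using b by (simp add: F2_def f2_def cos_ofr sin_ofr)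
  ultimately show ?thesis unfolding WW_def k m PP_def e gg_def exp_of_real by simp
qed

lemma WW_zero_region:
  assumes k1: "0 < k1" and k12: "k1 < k2" and d: "0 < d"
    and hyp: "\<forall>n::nat. n > 0 \<longrightarrow> 2 * d * sqrt (k2\<^sup>2 - k1\<^sup>2) \<noteq> real n * pi"
    and z: "WW k1 k2 d x = 0"
  shows "k1\<^sup>2 < x\<^sup>2 \<and> x\<^sup>2 < k2\<^sup>2"
proof -
  have sq: "k1\<^sup>2 < k2\<^sup>2" using k1 k12 by (simp add: power_strict_mono)
  have F: "F1 d (csqrt (complex_of_real (k1\<^sup>2 - x\<^sup>2))) (csqrt (complex_of_real (k2\<^sup>2 - x\<^sup>2))) = 0 \<or>
           F2 d (csqrt (complex_of_real (k1\<^sup>2 - x\<^sup>2))) (csqrt (complex_of_real (k2\<^sup>2 - x\<^sup>2))) = 0"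
    using z unfolding WW_def by (rule PP_zero)
  consider "x\<^sup>2 < k1\<^sup>2" | "x\<^sup>2 = k1\<^sup>2" | "k1\<^sup>2 < x\<^sup>2 \<and> x\<^sup>2 < k2\<^sup>2" | "x\<^sup>2 = k2\<^sup>2" | "k2\<^sup>2 < x\<^sup>2" by linarith
  then show ?thesis
  proof cases
    case 1
    have "csqrt (complex_of_real (k1\<^sup>2 - x\<^sup>2)) = complex_of_real (sqrt (k1\<^sup>2 - x\<^sup>2))"
      "csqrt (complex_of_real (k2\<^sup>2 - x\<^sup>2)) = complex_of_real (sqrt (k2\<^sup>2 - x\<^sup>2))"
      using 1 sq by (simp_all add: csqrt_of_real)
    moreover have "sqrt (k1\<^sup>2 - x\<^sup>2) \<noteq> 0" "sqrt (k2\<^sup>2 - x\<^sup>2) \<noteq> 0" using 1 sq by simp_all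
    ultimately show ?thesis using F F_real_nz by metis
  next
    case 2
    define s where "s = sqrt (k2\<^sup>2 - k1\<^sup>2)"
    have s: "s > 0" unfolding s_def using sq by simp
    have "csqrt (complex_of_real (k1\<^sup>2 - x\<^sup>2)) = 0" using 2 by simp
    moreover have "csqrt (complex_of_real (k2\<^sup>2 - x\<^sup>2)) = complex_of_real s" using 2 sq unfolding s_def by (simp add: csqrt_of_real)
    ultimately have "cos (s * d) = 0 \<or> s * sin (s * d) = 0" using F F_crit[OF s] by (metis of_real_eq_0_iff)
    then have "sin (2 * (s * d)) = 0" by (auto simp: sin_double)
    then obtain i :: int where i0: "2 * (s * d) = of_int i * pi" by (auto simp: sin_zero_iff_int2)
    then have i: "2 * s * d = of_int i * pi" by (simp add: mult.assoc)
    have "of_int i * pi > 0" using i s d by (metis mult_pos_pos zero_less_numeral)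
    then have "i > 0" by (simp add: zero_less_mult_iff)
    then have "2 * d * s = real (nat i) * pi" using i by (simp add: algebra_simps)
    moreover have "nat i > 0" using \<open>i > 0\<close> by simp
    ultimately show ?thesis using hyp unfolding s_def by blast
  next
    case 3 then show ?thesis .
  next
    case 4
    define g where "g = sqrt (k2\<^sup>2 - k1\<^sup>2)"
    have g: "g > 0" unfolding g_def using sq by simp
    have "csqrt (complex_of_real (k1\<^sup>2 - x\<^sup>2)) = \<i> * complex_of_real g"
      using 4 sq unfolding g_def by (simp add: csqrt_of_real_nonpos del: of_real_diff of_real_power)
    moreover have "csqrt (complex_of_real (k2\<^sup>2 - x\<^sup>2)) = 0" using 4 by simp
    ultimately show ?thesis using F F_k2[OF g d] by metis
  next
    case 5
    define g where "g = sqrt (x\<^sup>2 - k1\<^sup>2)"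
    define n where "n = sqrt (x\<^sup>2 - k2\<^sup>2)"
    have g: "g > 0" unfolding g_def using 5 sq by simp
    have n: "n > 0" unfolding n_def using 5 by simp
    have "csqrt (complex_of_real (k1\<^sup>2 - x\<^sup>2)) = \<i> * complex_of_real g"
      using 5 sq unfolding g_def by (simp add: csqrt_of_real_nonpos del: of_real_diff of_real_power)
    moreover have "csqrt (complex_of_real (k2\<^sup>2 - x\<^sup>2)) = \<i> * complex_of_real n"
      using 5 unfolding n_def by (simp add: csqrt_of_real_nonpos del: of_real_diff of_real_power)
    ultimately show ?thesis using F F_big[OF g n d] by metis
  qed
qed



lemma bb_deriv:
  assumes "x\<^sup>2 < k2\<^sup>2"
  shows "(bb k2 has_real_derivative (- x / bb k2 x)) (at x)"
proof -
  have p: "k2\<^sup>2 - x\<^sup>2 > 0" using assms by simp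
  have i: "((\<lambda>y. k2\<^sup>2 - y\<^sup>2) has_real_derivative (- (2 * x))) (at x)"
    by (auto intro!: derivative_eq_intros)
  have "((\<lambda>y. sqrt (k2\<^sup>2 - y\<^sup>2)) has_real_derivative (inverse (sqrt (k2\<^sup>2 - x\<^sup>2)) / 2 * (- (2 * x)))) (at x)"
    by (rule DERIV_chain2[OF DERIV_real_sqrt[OF p] i])
  moreover have "inverse (sqrt (k2\<^sup>2 - x\<^sup>2)) / 2 * (- (2 * x)) = - x / bb k2 x"
    unfolding bb_def by (simp add: field_simps)
  moreover have "bb k2 = (\<lambda>y. sqrt (k2\<^sup>2 - y\<^sup>2))" by (simp add: fun_eq_iff bb_def)
  ultimately show ?thesis by simp
qed

lemma gam_deriv:
  assumes "k1\<^sup>2 < x\<^sup>2"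
  shows "(gam k1 has_real_derivative (x / gam k1 x)) (at x)"
proof -
  have p: "x\<^sup>2 - k1\<^sup>2 > 0" using assms by simp
  have i: "((\<lambda>y. y\<^sup>2 - k1\<^sup>2) has_real_derivative (2 * x)) (at x)"
    by (auto intro!: derivative_eq_intros)
  have "((\<lambda>y. sqrt (y\<^sup>2 - k1\<^sup>2)) has_real_derivative (inverse (sqrt (x\<^sup>2 - k1\<^sup>2)) / 2 * (2 * x))) (at x)"
    by (rule DERIV_chain2[OF DERIV_real_sqrt[OF p] i])
  moreover have "inverse (sqrt (x\<^sup>2 - k1\<^sup>2)) / 2 * (2 * x) = x / gam k1 x"
    unfolding gam_def by (simp add: field_simps)
  moreover have "gam k1 = (\<lambda>y. sqrt (y\<^sup>2 - k1\<^sup>2))" by (simp add: fun_eq_iff gam_def)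
  ultimately show ?thesis by simp
qed

lemma f1_deriv:
  assumes bder: "(bb k2 has_real_derivative b') (at x)" and gder: "(gam k1 has_real_derivative g') (at x)"
    and bnz: "bb k2 x \<noteq> 0"
  shows "(f1 k1 k2 d has_real_derivative
    (- sin (bb k2 x * d) * (b' * d) + ((g' * sin (bb k2 x * d) + gam k1 x * (cos (bb k2 x * d) * (b' * d))) * bb k2 x
      - gam k1 x * sin (bb k2 x * d) * b') / (bb k2 x)\<^sup>2)) (at x)"
proof -
  have eq: "f1 k1 k2 d = (\<lambda>y. cos (bb k2 y * d) + gam k1 y * sin (bb k2 y * d) / bb k2 y)"
    by (simp add: fun_eq_iff f1_def)
  show ?thesis unfolding eq
    using bnz by (auto intro!: derivative_eq_intros bder gder simp: power2_eq_square)
qed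

lemma f2_deriv:
  assumes bder: "(bb k2 has_real_derivative b') (at x)" and gder: "(gam k1 has_real_derivative g') (at x)"
  shows "(f2 k1 k2 d has_real_derivative
    (b' * sin (bb k2 x * d) + bb k2 x * (cos (bb k2 x * d) * (b' * d))
      - (g' * cos (bb k2 x * d) + gam k1 x * (- sin (bb k2 x * d) * (b' * d))))) (at x)"
proof -
  have eq: "f2 k1 k2 d = (\<lambda>y. bb k2 y * sin (bb k2 y * d) - gam k1 y * cos (bb k2 y * d))"
    by (simp add: fun_eq_iff f2_def)
  show ?thesis unfolding eq
    by (auto intro!: derivative_eq_intros bder gder)
qed

lemma nzA:
  fixes b g x d s c :: real
  assumes b: "b > 0" and g: "g > 0" and x: "x \<noteq> 0" and d: "d > 0" and sc: "s\<^sup>2 + c\<^sup>2 = 1"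
    and z: "c + g * s / b = 0"
  shows "- s * ((- x / b) * d) + (((x / g) * s + g * (c * ((- x / b) * d))) * b - g * s * (- x / b)) / b\<^sup>2 \<noteq> 0"
proof -
  have ce: "c = - g * s / b" using z b by (simp add: field_simps)
  have s: "s \<noteq> 0" using sc ce by auto
  have "- s * ((- x / b) * d) + (((x / g) * s + g * (c * ((- x / b) * d))) * b - g * s * (- x / b)) / b\<^sup>2
      = x * s * (d / b + 1 / (g * b) + g * g * d / (b * b * b) + g / (b * b * b))"
    unfolding ce using b g by (simp add: field_simps power2_eq_square)
  moreover have "d / b + 1 / (g * b) + g * g * d / (b * b * b) + g / (b * b * b) > 0"
    using b g d by (intro add_pos_pos) simp_all
  ultimately show ?thesis using x s by simp
qed

lemma nzB:
  fixes b g x d s c :: real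
  assumes b: "b > 0" and g: "g > 0" and x: "x \<noteq> 0" and d: "d > 0" and sc: "s\<^sup>2 + c\<^sup>2 = 1"
    and z: "b * s - g * c = 0"
  shows "(- x / b) * s + b * (c * ((- x / b) * d)) - ((x / g) * c + g * (- s * ((- x / b) * d))) \<noteq> 0"
proof -
  have se: "s = g * c / b" using z b by (simp add: field_simps)
  have c: "c \<noteq> 0" using sc se by auto
  have "(- x / b) * s + b * (c * ((- x / b) * d)) - ((x / g) * c + g * (- s * ((- x / b) * d)))
      = - x * c * (g / (b * b) + d + 1 / g + g * g * d / (b * b))"
    unfolding se using b g by (simp add: field_simps power2_eq_square)
  moreover have "g / (b * b) + d + 1 / g + g * g * d / (b * b) > 0"
    using b g d by (intro add_pos_pos) simp_all
  ultimately show ?thesis using x c by simp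
qed

lemma not_both:
  fixes b g s c :: real
  assumes b: "b > 0" and sc: "s\<^sup>2 + c\<^sup>2 = 1" and z1: "c + g * s / b = 0" and z2: "b * s - g * c = 0"
  shows False
proof -
  have ce: "c = - g * s / b" using z1 b by (simp add: field_simps)
  have "s * (b * b + g * g) = 0" using z2 b unfolding ce by (simp add: field_simps)
  moreover have "b * b + g * g > 0" using b by (simp add: add_pos_nonneg)
  ultimately have "s = 0" using b by auto
  then show False using sc ce by simp
qed

lemma gg_deriv_nz:
  assumes k1: "0 < k1" and d: "0 < d" and r1: "k1\<^sup>2 < x\<^sup>2" and r2: "x\<^sup>2 < k2\<^sup>2"
    and z: "gg k1 k2 d x = 0"
  shows "\<exists>D. D \<noteq> 0 \<and> (gg k1 k2 d has_real_derivative D) (at x)"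
proof -
  define b where "b = bb k2 x"
  define g where "g = gam k1 x"
  define s where "s = sin (b * d)"
  define c where "c = cos (b * d)"
  have b: "b > 0" unfolding b_def bb_def using r2 by simp
  have g: "g > 0" unfolding g_def gam_def using r1 by simp
  have x: "x \<noteq> 0" using r1 k1 by auto
  have sc: "s\<^sup>2 + c\<^sup>2 = 1" unfolding s_def c_def by simp
  have bd: "(bb k2 has_real_derivative (- x / b)) (at x)" unfolding b_def by (rule bb_deriv[OF r2])
  have gd: "(gam k1 has_real_derivative (x / g)) (at x)" unfolding g_def by (rule gam_deriv[OF r1])
  define F1' where "F1' = - s * ((- x / b) * d) + (((x / g) * s + g * (c * ((- x / b) * d))) * b - g * s * (- x / b)) / b\<^sup>2"
  define F2' where "F2' = (- x / b) * s + b * (c * ((- x / b) * d)) - ((x / g) * c + g * (- s * ((- x / b) * d)))"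
  have f1d: "(f1 k1 k2 d has_real_derivative F1') (at x)"
    using f1_deriv[OF bd gd, of d] b unfolding F1'_def s_def c_def b_def g_def by simp
  have f2d: "(f2 k1 k2 d has_real_derivative F2') (at x)"
    using f2_deriv[OF bd gd, of d] unfolding F2'_def s_def c_def b_def g_def by simp
  define h where "h = (\<lambda>y. 2 * exp (- (2 * d * gam k1 y)))"
  define h' where "h' = 2 * (exp (- (2 * d * g)) * (- (2 * d * (x / g))))"
  have hd: "(h has_real_derivative h') (at x)" unfolding h_def h'_def g_def
    by (auto intro!: derivative_eq_intros gd[unfolded g_def])
  have geq: "gg k1 k2 d = (\<lambda>y. h y * f1 k1 k2 d y * f2 k1 k2 d y)" by (simp add: fun_eq_iff gg_def h_def)
  have D: "(gg k1 k2 d has_real_derivative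
      (h' * f1 k1 k2 d x + F1' * h x) * f2 k1 k2 d x + F2' * (h x * f1 k1 k2 d x)) (at x)"
    unfolding geq using DERIV_mult[OF DERIV_mult[OF hd f1d] f2d] by simp
  have hx: "h x > 0" unfolding h_def by simp
  have f1x: "f1 k1 k2 d x = c + g * s / b" unfolding f1_def b_def g_def s_def c_def by simp
  have f2x: "f2 k1 k2 d x = b * s - g * c" unfolding f2_def b_def g_def s_def c_def by simp
  have "f1 k1 k2 d x = 0 \<or> f2 k1 k2 d x = 0" using z hx unfolding gg_def h_def by simp
  then show ?thesis
  proof
    assume a: "f1 k1 k2 d x = 0"
    then have "f2 k1 k2 d x \<noteq> 0" using not_both[OF b sc] unfolding f1x f2x by blast
    moreover have "F1' \<noteq> 0" unfolding F1'_def using nzA[OF b g x d sc] a unfolding f1x by blast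
    ultimately show ?thesis using D a hx by (intro exI[of _ "(h' * f1 k1 k2 d x + F1' * h x) * f2 k1 k2 d x + F2' * (h x * f1 k1 k2 d x)"]) simp
  next
    assume a: "f2 k1 k2 d x = 0"
    then have "f1 k1 k2 d x \<noteq> 0" using not_both[OF b sc] unfolding f1x f2x by blast
    moreover have "F2' \<noteq> 0" unfolding F2'_def using nzB[OF b g x d sc] a unfolding f2x by blast
    ultimately show ?thesis using D a hx by (intro exI[of _ "(h' * f1 k1 k2 d x + F1' * h x) * f2 k1 k2 d x + F2' * (h x * f1 k1 k2 d x)"]) simp
  qed
qed



lemma WW_minus: "WW k1 k2 d (- x) = WW k1 k2 d x"
  by (simp add: WW_def)

lemma open_region: "open {y::real. k1\<^sup>2 < y\<^sup>2 \<and> y\<^sup>2 < k2\<^sup>2}"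
proof -
  have "{y::real. k1\<^sup>2 < y\<^sup>2 \<and> y\<^sup>2 < k2\<^sup>2} = {y. k1\<^sup>2 < y\<^sup>2} \<inter> {y. y\<^sup>2 < k2\<^sup>2}" by auto
  moreover have "open {y::real. k1\<^sup>2 < y\<^sup>2}" by (intro open_Collect_less continuous_intros)
  moreover have "open {y::real. y\<^sup>2 < k2\<^sup>2}" by (intro open_Collect_less continuous_intros)
  ultimately show ?thesis by auto
qed

context
  fixes k1 k2 d :: real
  assumes k1: "0 < k1" and k12: "k1 < k2" and d: "0 < d"
    and hyp: "\<forall>n::nat. n > 0 \<longrightarrow> 2 * d * sqrt (k2\<^sup>2 - k1\<^sup>2) \<noteq> real n * pi"
begin

lemma zero_info:
  assumes z: "WW k1 k2 d x = 0"
  shows "k1\<^sup>2 < x\<^sup>2" "x\<^sup>2 < k2\<^sup>2" "gg k1 k2 d x = 0"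
    "\<exists>D. D \<noteq> 0 \<and> (gg k1 k2 d has_real_derivative D) (at x)"
proof -
  show r1: "k1\<^sup>2 < x\<^sup>2" and r2: "x\<^sup>2 < k2\<^sup>2" using WW_zero_region[OF k1 k12 d hyp z] by auto
  show g0: "gg k1 k2 d x = 0" using z WW_region[OF r1 r2, of d] by simp
  show "\<exists>D. D \<noteq> 0 \<and> (gg k1 k2 d has_real_derivative D) (at x)"
    by (rule gg_deriv_nz[OF k1 d r1 r2 g0])
qed

lemma isolated:
  assumes z: "WW k1 k2 d x = 0"
  shows "eventually (\<lambda>y. WW k1 k2 d y \<noteq> 0) (at x)"
proof -
  let ?O = "{y::real. k1\<^sup>2 < y\<^sup>2 \<and> y\<^sup>2 < k2\<^sup>2}"
  obtain D where D: "D \<noteq> 0" "(gg k1 k2 d has_real_derivative D) (at x)" using zero_info(4)[OF z] by blast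
  have g0: "gg k1 k2 d x = 0" by (rule zero_info(3)[OF z])
  have "((\<lambda>y. (gg k1 k2 d y - gg k1 k2 d x) / (y - x)) \<longlongrightarrow> D) (at x)"
    using D(2) unfolding has_field_derivative_iff .
  then have e1: "eventually (\<lambda>y. (gg k1 k2 d y - gg k1 k2 d x) / (y - x) \<noteq> 0) (at x)"
    using D(1) by (rule tendsto_imp_eventually_ne)
  have e2: "eventually (\<lambda>y. y \<in> ?O) (at x)"
    by (rule eventually_at_in_open'[OF open_region]) (use zero_info[OF z] in auto)
  show ?thesis using e1 e2
  proof eventually_elim
    case (elim y)
    then have "gg k1 k2 d y \<noteq> 0" using g0 by auto
    then show ?case using WW_region[of k1 y k2 d] elim(2) by simp
  qed
qed

lemma W0_deriv:
  assumes z: "WW k1 k2 d x = 0"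
  shows "\<exists>D. D \<noteq> 0 \<and> (W0 k1 k2 d has_vector_derivative D) (at x)"
proof -
  let ?O = "{y::real. k1\<^sup>2 < y\<^sup>2 \<and> y\<^sup>2 < k2\<^sup>2}"
  obtain D where D: "D \<noteq> 0" "(gg k1 k2 d has_real_derivative D) (at x)" using zero_info(4)[OF z] by blast
  have "((\<lambda>y. complex_of_real (gg k1 k2 d y)) has_vector_derivative complex_of_real D) (at x)"
    by (rule has_vector_derivative_of_real[OF D(2)])
  then have "(WW k1 k2 d has_vector_derivative complex_of_real D) (at x)"
    by (rule has_vector_derivative_transform_within_open[OF _ open_region])
       (use zero_info[OF z] WW_region in auto)
  moreover have "W0 k1 k2 d = WW k1 k2 d" using W0_eq[OF d] by (simp add: fun_eq_iff)
  ultimately show ?thesis using D(1) by (intro exI[of _ "complex_of_real D"]) simp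
qed

lemma Z_finite: "finite {x. WW k1 k2 d x = 0}"
proof (rule ccontr)
  let ?Z = "{x. WW k1 k2 d x = 0}"
  assume inf: "infinite ?Z"
  have cl: "closed ?Z" by (rule closed_Collect_eq[OF WW_cont continuous_on_const])
  have sub: "?Z \<subseteq> {-k2..k2}"
  proof
    fix x assume "x \<in> ?Z"
    then have "x\<^sup>2 < k2\<^sup>2" using zero_info(2) by auto
    then have "\<bar>x\<bar> < k2" using k1 k12 by (metis abs_of_pos order.strict_trans power2_abs power_less_imp_less_base less_le)
    then show "x \<in> {-k2..k2}" by auto
  qed
  have "compact ?Z" using cl bounded_subset[OF bounded_closed_interval sub] by (simp add: compact_eq_bounded_closed)
  then obtain x where x: "x \<in> ?Z" "x islimpt ?Z" using inf unfolding compact_eq_Bolzano_Weierstrass by blast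
  have "eventually (\<lambda>y. y \<notin> ?Z) (at x)" using isolated[of x] x(1) by simp
  then show False using x(2) unfolding islimpt_iff_eventually by blast
qed

lemma Z_nonempty: "\<exists>x. WW k1 k2 d x = 0"
proof -
  define V where "V = k2\<^sup>2 - k1\<^sup>2"
  have sq: "k1\<^sup>2 < k2\<^sup>2" using k1 k12 by (simp add: power_strict_mono)
  have V: "V > 0" unfolding V_def using sq by simp
  have cont: "continuous_on {a..b} (f2 k1 k2 d)" for a b
  proof -
    have "f2 k1 k2 d = (\<lambda>y. sqrt (k2\<^sup>2 - y\<^sup>2) * sin (sqrt (k2\<^sup>2 - y\<^sup>2) * d) - sqrt (y\<^sup>2 - k1\<^sup>2) * cos (sqrt (k2\<^sup>2 - y\<^sup>2) * d))"
      by (simp add: fun_eq_iff f2_def bb_def gam_def)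
    then show ?thesis by (simp add: continuous_intros)
  qed
  have fk2: "f2 k1 k2 d k2 < 0" unfolding f2_def bb_def gam_def using sq by simp
  obtain x0 where x0: "k1 \<le> x0" "x0 < k2" "f2 k1 k2 d x0 > 0"
  proof (cases "sqrt V * d < pi")
    case True
    have "f2 k1 k2 d k1 = sqrt V * sin (sqrt V * d)" unfolding f2_def bb_def gam_def V_def by simp
    moreover have "sin (sqrt V * d) > 0" using True V d by (intro sin_gt_zero) auto
    ultimately have "f2 k1 k2 d k1 > 0" using V by simp
    then show ?thesis using that k12 by auto
  next
    case False
    define p where "p = pi / (2 * d)"
    have p: "p > 0" unfolding p_def using d by simp
    have "pi \<le> sqrt V * d" using False by simp
    then have "pi / d \<le> sqrt V" using d by (simp add: field_simps)
    moreover have "0 \<le> sqrt V" using V by simp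
    ultimately have "pi / d \<le> 2 * sqrt V" by linarith
    then have "p \<le> sqrt V" unfolding p_def using d by (simp add: field_simps)
    then have pV: "p\<^sup>2 \<le> V" using p V by (metis less_eq_real_def power_mono real_sqrt_pow2)
    define y where "y = sqrt (k2\<^sup>2 - p\<^sup>2)"
    have yk: "k2\<^sup>2 - p\<^sup>2 \<ge> k1\<^sup>2" using pV unfolding V_def by simp
    have "k1\<^sup>2 \<ge> 0" by simp
    then have nn: "0 \<le> k2\<^sup>2 - p\<^sup>2" using yk by linarith
    have y2: "y\<^sup>2 = k2\<^sup>2 - p\<^sup>2" unfolding y_def by (rule real_sqrt_pow2[OF nn])
    have y0: "y \<ge> 0" unfolding y_def using nn by simp
    have "k1 \<le> y"
      using yk y2 y0 k1 by (metis power2_le_imp_le)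
    moreover have "y < k2"
    proof -
      have "y\<^sup>2 < k2\<^sup>2" using y2 p by simp
      then show ?thesis using k1 k12 by (metis power_less_imp_less_base less_le order.strict_trans)
    qed
    moreover have "bb k2 y = p" unfolding bb_def y2 using p by simp
    then have "f2 k1 k2 d y = p" unfolding f2_def p_def using d by simp
    ultimately show ?thesis using that p by auto
  qed
  obtain r where r: "x0 \<le> r" "r \<le> k2" "f2 k1 k2 d r = 0"
    using IVT2'[of "f2 k1 k2 d" k2 0 x0] fk2 x0 cont by fastforce
  have "r \<noteq> k2" using r fk2 by auto
  have "r \<noteq> x0" using r x0 by auto
  have r1: "k1 < r" using r x0 \<open>r \<noteq> x0\<close> by simp
  have r2: "r < k2" using r \<open>r \<noteq> k2\<close> by simp
  have "k1\<^sup>2 < r\<^sup>2" using r1 k1 by (simp add: power_strict_mono)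
  moreover have "r\<^sup>2 < k2\<^sup>2" using r2 r1 k1 by (simp add: power_strict_mono)
  ultimately have "WW k1 k2 d r = complex_of_real (gg k1 k2 d r)" by (rule WW_region)
  also have "\<dots> = 0" using r(3) by (simp add: gg_def)
  finally show ?thesis by blast
qed

end


theorem theorem2:
  fixes k1 k2 d :: real
  assumes "0 < k1" and "k1 < k2" and "0 < d"
    and "\<forall>n::nat. n > 0 \<longrightarrow> 2 * d * sqrt (k2\<^sup>2 - k1\<^sup>2) \<noteq> real n * pi"
  shows "(\<forall>xi delta. delta > 0 \<longrightarrow> Wr k1 k2 d xi delta \<noteq> 0) \<and>
    (let Z = {xi. ((\<lambda>delta. Wr k1 k2 d xi delta) \<longlongrightarrow> 0) (at_right 0)} in
       finite Z \<and> Z \<noteq> {} \<and>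
       (\<forall>xi\<in>Z. - xi \<in> Z \<and> k1 < \<bar>xi\<bar> \<and> \<bar>xi\<bar> < k2 \<and>
          (\<exists>D. D \<noteq> 0 \<and> (W0 k1 k2 d has_vector_derivative D) (at xi))))"
proof -
  have Zeq: "{xi. ((\<lambda>delta. Wr k1 k2 d xi delta) \<longlongrightarrow> 0) (at_right 0)} = {xi. WW k1 k2 d xi = 0}"
    using Z_iff[OF assms(3)] by auto
  have A: "\<forall>xi delta. delta > 0 \<longrightarrow> Wr k1 k2 d xi delta \<noteq> 0" using Wr_nz[OF assms(3)] by blast
  have B: "finite {xi. WW k1 k2 d xi = 0}" by (rule Z_finite[OF assms])
  have C: "{xi. WW k1 k2 d xi = 0} \<noteq> {}" using Z_nonempty[OF assms] by auto
  have E: "- xi \<in> {xi. WW k1 k2 d xi = 0} \<and> k1 < \<bar>xi\<bar> \<and> \<bar>xi\<bar> < k2 \<and>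
          (\<exists>D. D \<noteq> 0 \<and> (W0 k1 k2 d has_vector_derivative D) (at xi))"
    if "xi \<in> {xi. WW k1 k2 d xi = 0}" for xi
  proof -
    have z: "WW k1 k2 d xi = 0" using that by simp
    have r1: "k1\<^sup>2 < \<bar>xi\<bar>\<^sup>2" using zero_info(1)[OF assms z] by simp
    have r2: "\<bar>xi\<bar>\<^sup>2 < k2\<^sup>2" using zero_info(2)[OF assms z] by simp
    have "k1 < \<bar>xi\<bar>" by (rule power_less_imp_less_base[OF r1]) simp
    moreover have "\<bar>xi\<bar> < k2" by (rule power_less_imp_less_base[OF r2]) (use assms in simp)
    moreover have "- xi \<in> {xi. WW k1 k2 d xi = 0}" using z WW_minus by simp
    ultimately show ?thesis using W0_deriv[OF assms z] by blast
  qed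
  show ?thesis unfolding Let_def Zeq using A B C E by blast
qed


end
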